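(* Let $R=\mathbb{C}[u]/(u^2)$ and let $\mathcal{A}=(A_1,\dots,A_4)$ be a quadruple of $5\times5$ alternating matrices with entries $a^{(k)}_{ij}\in R$. Suppose the closed subscheme of $\mathbb{P}^3_R$ cut out by the five $4\times4$ principal sub-Pfaffians of $\mathcal{A}(\mathbf{x})=\sum_kA_kx_k$ has Zariski tangent space of dimension at least $2$ at a point $p$ (lying over $u=0$). Then there exists $\gamma\in U_4(\mathbb{C})\times U_5(\mathbb{C})$ such that either $\gamma(\mathcal{A})$ is in normal form of type $(K)$ for some $1\le K\le4$, or $\gamma(\mathcal{A})$ is in normal form of type $(I,J,K)$ for some $1\le I<J\le5$, $1\le K\le4$.
   Context: $U_n\subset\mathrm{GL}_n$ is the subgroup of lower triangular unipotent matrices, acting on quadruples by $A_k\mapsto\sum_l(g_4)_{kl}A_l$ and $A_k\mapsto g_5A_kg_5^t$. For $a\in R$, $a\equiv0\pmod u$ means $a\in uR$ and $a\equiv0\pmod{u^2}$ means $a=0$. A quadruple is in normal form of type $(K)$ if every entry of $A_K$ is $\equiv0\pmod u$. It is in normal form of type $(I,J,K)$ ($1\le I<J\le5$, $1\le K\le4$) if $a^{(k)}_{IJ}\equiv0\pmod u$ for all $k$; $a^{(K)}_{Ij}\equiv0\pmod u$ for all $j$; $a^{(K)}_{iJ}\equiv0\pmod u$ for all $i$; and $a^{(K)}_{IJ}\equiv0\pmod{u^2}$. *)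

theory Defs
  imports "HOL-Analysis.Analysis" "HOL-Computational_Algebra.Polynomial" "HOL-Library.Function_Algebras"
begin

text \<open>Elements of R = C[u]/(u^2) are encoded as pairs (a0, a1) standing for a0 + a1 u.
  A quadruple of 5x5 matrices over R is a function A k i j (k in 1..4, i,j in 1..5).\<close>

type_synonym ringR = "complex \<times> complex"
type_synonym quadR = "nat \<Rightarrow> nat \<Rightarrow> nat \<Rightarrow> ringR"

definition alternating_quad :: "quadR \<Rightarrow> bool" where
  "alternating_quad A \<longleftrightarrow>
     (\<forall>k\<in>{1..4}. \<forall>i\<in>{1..5}. \<forall>j\<in>{1..5}. A k i j = (- fst (A k j i), - snd (A k j i)))"

definition pf4 :: "(nat \<Rightarrow> nat \<Rightarrow> 'a::comm_ring_1) \<Rightarrow> nat \<Rightarrow> nat \<Rightarrow> nat \<Rightarrow> nat \<Rightarrow> 'a" where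
  "pf4 M a b c d = M a b * M c d - M a c * M b d + M a d * M b c"

definition subpf :: "(nat \<Rightarrow> nat \<Rightarrow> 'a::comm_ring_1) \<Rightarrow> nat \<Rightarrow> 'a" where
  "subpf M i = (let l = filter (\<lambda>j. j \<noteq> i) [1..<6] in pf4 M (l!0) (l!1) (l!2) (l!3))"

definition red0 :: "quadR \<Rightarrow> nat \<Rightarrow> nat \<Rightarrow> nat \<Rightarrow> complex" where
  "red0 A k i j = fst (A k i j)"

definition evalA0 :: "quadR \<Rightarrow> (nat \<Rightarrow> complex) \<Rightarrow> nat \<Rightarrow> nat \<Rightarrow> complex" where
  "evalA0 A x i j = (\<Sum>k=1..4. red0 A k i j * x k)"

definition on_X :: "quadR \<Rightarrow> (nat \<Rightarrow> complex) \<Rightarrow> bool" where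
  "on_X A p \<longleftrightarrow> (\<exists>k\<in>{1..4}. p k \<noteq> 0) \<and> (\<forall>i\<in>{1..5}. subpf (evalA0 A p) i = 0)"

text \<open>Evaluation of A(x) at a C[eps]-valued point (eps^2 = 0, eps the variable of a complex
  polynomial): the structure map R -> C[eps] sends u to t*eps, and x_k to p_k + eps*w_k.\<close>
definition evalA_dual :: "quadR \<Rightarrow> complex \<Rightarrow> (nat \<Rightarrow> complex) \<Rightarrow> (nat \<Rightarrow> complex)
    \<Rightarrow> nat \<Rightarrow> nat \<Rightarrow> complex poly" where
  "evalA_dual A t p w i j = (\<Sum>k=1..4. [:fst (A k i j), t * snd (A k i j):] * [:p k, w k:])"

text \<open>Tangent vectors to the affine cone: v 0 = t (the u-direction), v 1..v 4 = w,
  all other coordinates 0; the condition is that all sub-Pfaffians vanish mod eps^2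
  (the constant terms vanish because p is on X).\<close>
definition tangent_cone :: "quadR \<Rightarrow> (nat \<Rightarrow> complex) \<Rightarrow> (nat \<Rightarrow> complex) set" where
  "tangent_cone A p = {v. (\<forall>i>4. v i = 0) \<and>
      (\<forall>i\<in>{1..5}. coeff (subpf (evalA_dual A (v 0) p v) i) 0 = 0
                 \<and> coeff (subpf (evalA_dual A (v 0) p v) i) 1 = 0)}"

definition cscale :: "complex \<Rightarrow> (nat \<Rightarrow> complex) \<Rightarrow> (nat \<Rightarrow> complex)" where
  "cscale c v = (\<lambda>i. c * v i)"

text \<open>Zariski tangent space of X at p: the C[eps]-points of X over p, modulo the
  direction (0,p) coming from rescaling homogeneous coordinates by units of C[eps].\<close>
definition zariski_tangent_dim :: "quadR \<Rightarrow> (nat \<Rightarrow> complex) \<Rightarrow> nat" where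
  "zariski_tangent_dim A p = vector_space.dim cscale (tangent_cone A p) - 1"

definition unipotent_lower :: "nat \<Rightarrow> (nat \<Rightarrow> nat \<Rightarrow> complex) \<Rightarrow> bool" where
  "unipotent_lower n g \<longleftrightarrow>
     (\<forall>i\<in>{1..n}. g i i = 1) \<and> (\<forall>i\<in>{1..n}. \<forall>j\<in>{1..n}. i < j \<longrightarrow> g i j = 0)"

definition act :: "(nat \<Rightarrow> nat \<Rightarrow> complex) \<Rightarrow> (nat \<Rightarrow> nat \<Rightarrow> complex) \<Rightarrow> quadR \<Rightarrow> quadR" where
  "act g4 g5 A k i j =
     ((\<Sum>l=1..4. g4 k l * (\<Sum>a=1..5. \<Sum>b=1..5. g5 i a * fst (A l a b) * g5 j b)),
      (\<Sum>l=1..4. g4 k l * (\<Sum>a=1..5. \<Sum>b=1..5. g5 i a * snd (A l a b) * g5 j b)))"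

text \<open>a == 0 mod u  iff  fst a = 0;  a == 0 mod u^2  iff  a = 0.\<close>
definition normal_form_K :: "quadR \<Rightarrow> nat \<Rightarrow> bool" where
  "normal_form_K A K \<longleftrightarrow> (\<forall>i\<in>{1..5}. \<forall>j\<in>{1..5}. fst (A K i j) = 0)"

definition normal_form_IJK :: "quadR \<Rightarrow> nat \<Rightarrow> nat \<Rightarrow> nat \<Rightarrow> bool" where
  "normal_form_IJK A I J K \<longleftrightarrow>
     (\<forall>k\<in>{1..4}. fst (A k I J) = 0) \<and>
     (\<forall>j\<in>{1..5}. fst (A K I j) = 0) \<and>
     (\<forall>i\<in>{1..5}. fst (A K i J) = 0) \<and>
     A K I J = (0, 0)"

end

theory Submission
  imports Defs
begin


interpretation cs: vector_space cscale
  by unfold_locales (auto simp: cscale_def algebra_simps)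

lemma sum_fun_apply: "(\<Sum>x\<in>A. (f x :: nat \<Rightarrow> complex)) i = (\<Sum>x\<in>A. f x i)"
  by (induction A rule: infinite_finite_induct) auto

lemma supp_in_span:
  assumes "\<forall>i>4. y i = (0::complex)"
  shows "y \<in> cs.span ((\<lambda>j. (\<lambda>i. if i = j then 1 else 0)) ` {..4::nat})"
proof -
  have "y = (\<Sum>j\<le>4. cscale (y j) (\<lambda>i. if i = j then 1 else 0))"
  proof
    fix i
    show "y i = (\<Sum>j\<le>4. cscale (y j) (\<lambda>i. if i = j then 1 else 0)) i"
    proof -
      have "(\<Sum>j\<le>4. cscale (y j) (\<lambda>i. if i = j then 1 else 0)) i = (\<Sum>j\<le>4. if j = i then y i else 0)"
        unfolding sum_fun_apply cscale_def by (intro sum.cong) auto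
      also have "\<dots> = (if i \<le> 4 then y i else 0)" by simp
      finally show ?thesis using assms by (auto simp: not_le)
    qed
  qed
  also have "\<dots> \<in> cs.span ((\<lambda>j. (\<lambda>i. if i = j then 1 else 0)) ` {..4::nat})"
    by (intro cs.span_sum cs.span_scale cs.span_base) auto
  finally show ?thesis .
qed

lemma dim_lemma:
  fixes T :: "(nat \<Rightarrow> complex) set" and c1 c2 c3 :: "nat \<Rightarrow> complex"
  assumes D: "cs.dim T \<ge> 3"
    and S: "\<And>v i. v \<in> T \<Longrightarrow> i > 4 \<Longrightarrow> v i = 0"
    and H1: "\<And>v. v \<in> T \<Longrightarrow> (\<Sum>i\<le>4. c1 i * v i) = 0"
    and H2: "\<And>v. v \<in> T \<Longrightarrow> (\<Sum>i\<le>4. c2 i * v i) = 0"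
    and H3: "\<And>v. v \<in> T \<Longrightarrow> (\<Sum>i\<le>4. c3 i * v i) = 0"
  shows "\<exists>l1 l2 l3. (l1 \<noteq> 0 \<or> l2 \<noteq> 0 \<or> l3 \<noteq> 0) \<and> (\<forall>i\<le>4. l1 * c1 i + l2 * c2 i + l3 * c3 i = 0)"
proof (rule ccontr)
  assume N: "\<not> ?thesis"
  have N': "l1 = 0 \<and> l2 = 0 \<and> l3 = 0" if "\<forall>i\<le>4. l1 * c1 i + l2 * c2 i + l3 * c3 i = 0" for l1 l2 l3
    using N that by blast
  define Z where "Z = {y::nat\<Rightarrow>complex. (\<Sum>i\<le>4. c1 i * y i) = 0 \<and> (\<Sum>i\<le>4. c2 i * y i) = 0
      \<and> (\<Sum>i\<le>4. c3 i * y i) = 0 \<and> (\<forall>i>4. y i = 0)}"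
  have subZ: "cs.subspace Z"
    unfolding cs.subspace_def Z_def
    by (auto simp: cscale_def sum.distrib algebra_simps sum_distrib_left[symmetric])
  have TZ: "T \<subseteq> Z" using S H1 H2 H3 by (auto simp: Z_def)
  have spanZ: "cs.span T \<subseteq> Z" by (rule cs.span_minimal[OF TZ subZ])
  define cb where "cb c = (\<lambda>i. if i \<le> 4 then cnj (c i) else 0)" for c :: "nat \<Rightarrow> complex"
  have key: "a1 = 0 \<and> a2 = 0 \<and> a3 = 0"
    if y: "(\<lambda>i. a1 * cb c1 i + a2 * cb c2 i + a3 * cb c3 i) \<in> Z" for a1 a2 a3
  proof -
    define y where "y = (\<lambda>i. a1 * cb c1 i + a2 * cb c2 i + a3 * cb c3 i)"
    have yZ: "y \<in> Z" using y by (simp add: y_def)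
    have "(\<Sum>i\<le>4. cnj (y i) * y i) = (\<Sum>i\<le>4. (cnj a1 * c1 i + cnj a2 * c2 i + cnj a3 * c3 i) * y i)"
      by (intro sum.cong) (auto simp: y_def cb_def)
    also have "\<dots> = cnj a1 * (\<Sum>i\<le>4. c1 i * y i) + cnj a2 * (\<Sum>i\<le>4. c2 i * y i) + cnj a3 * (\<Sum>i\<le>4. c3 i * y i)"
      by (simp add: sum.distrib sum_distrib_left algebra_simps)
    also have "\<dots> = 0" using yZ by (simp add: Z_def)
    finally have s0: "(\<Sum>i\<le>4. cnj (y i) * y i) = 0" .
    have e: "(\<Sum>i\<le>4. cnj (y i) * y i) = of_real (\<Sum>i\<le>4. (norm (y i))\<^sup>2)"
      unfolding of_real_sum complex_norm_square by (simp add: mult.commute)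
    have "(\<Sum>i\<le>4. (norm (y i))\<^sup>2) = 0" using s0 e of_real_eq_0_iff by metis
    hence "\<forall>i\<in>{..4}. (norm (y i))\<^sup>2 = 0"
      by (subst (asm) sum_nonneg_eq_0_iff) auto
    hence y0: "\<forall>i\<le>4. y i = 0" by simp
    have "\<forall>i\<le>4. cnj a1 * c1 i + cnj a2 * c2 i + cnj a3 * c3 i = 0"
    proof (intro allI impI)
      fix i :: nat assume i: "i \<le> 4"
      have "cnj (y i) = 0" using y0 i by simp
      thus "cnj a1 * c1 i + cnj a2 * c2 i + cnj a3 * c3 i = 0"
        using i by (simp add: y_def cb_def)
    qed
    from N'[OF this] show ?thesis by simp
  qed
  obtain B where B: "B \<subseteq> T" "cs.independent B" "T \<subseteq> cs.span B" "card B = cs.dim T"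
    using cs.basis_exists by blast
  have "3 \<le> card B" using B D by simp
  then obtain S0 where S0: "S0 \<subseteq> B" "card S0 = 3" "finite S0"
    by (rule obtain_subset_with_card_n)
  have indS0: "cs.independent S0" using B(2) S0(1) cs.independent_mono by blast
  have spS0: "cs.span S0 \<subseteq> Z"
    using cs.span_mono[of S0 T] S0(1) B(1) spanZ by blast
  have n1: "cb c1 \<notin> cs.span S0"
  proof
    assume "cb c1 \<in> cs.span S0"
    hence "(\<lambda>i. 1 * cb c1 i + 0 * cb c2 i + 0 * cb c3 i) \<in> Z" using spS0 by auto
    from key[OF this] show False by simp
  qed
  have n2: "cb c2 \<notin> cs.span (insert (cb c1) S0)"
  proof
    assume "cb c2 \<in> cs.span (insert (cb c1) S0)"
    then obtain k where "cb c2 - cscale k (cb c1) \<in> cs.span S0"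
      by (auto simp: cs.span_insert)
    hence "cb c2 - cscale k (cb c1) \<in> Z" using spS0 by auto
    moreover have "cb c2 - cscale k (cb c1) = (\<lambda>i. (-k) * cb c1 i + 1 * cb c2 i + 0 * cb c3 i)"
      by (auto simp: cscale_def)
    ultimately have "(\<lambda>i. (-k) * cb c1 i + 1 * cb c2 i + 0 * cb c3 i) \<in> Z" by simp
    from key[OF this] show False by simp
  qed
  have n3: "cb c3 \<notin> cs.span (insert (cb c2) (insert (cb c1) S0))"
  proof
    assume "cb c3 \<in> cs.span (insert (cb c2) (insert (cb c1) S0))"
    then obtain k2 where "cb c3 - cscale k2 (cb c2) \<in> cs.span (insert (cb c1) S0)"
      by (auto simp: cs.span_insert)
    then obtain k1 where "cb c3 - cscale k2 (cb c2) - cscale k1 (cb c1) \<in> cs.span S0"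
      by (auto simp: cs.span_insert)
    hence "cb c3 - cscale k2 (cb c2) - cscale k1 (cb c1) \<in> Z" using spS0 by auto
    moreover have "cb c3 - cscale k2 (cb c2) - cscale k1 (cb c1) = (\<lambda>i. (-k1) * cb c1 i + (-k2) * cb c2 i + 1 * cb c3 i)"
      by (auto simp: cscale_def)
    ultimately have "(\<lambda>i. (-k1) * cb c1 i + (-k2) * cb c2 i + 1 * cb c3 i) \<in> Z" by simp
    from key[OF this] show False by simp
  qed
  define S where "S = insert (cb c3) (insert (cb c2) (insert (cb c1) S0))"
  have indS: "cs.independent S"
    unfolding S_def by (intro cs.independent_insertI n1 n2 n3 indS0)
  have m1: "cb c1 \<notin> S0" using n1 cs.span_superset[of S0] by blast
  have m2: "cb c2 \<notin> insert (cb c1) S0" using n2 cs.span_superset[of "insert (cb c1) S0"] by blast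
  have m3: "cb c3 \<notin> insert (cb c2) (insert (cb c1) S0)" using n3 cs.span_superset[of "insert (cb c2) (insert (cb c1) S0)"] by blast
  have cardS: "card S = 6" unfolding S_def using m1 m2 m3 S0 by simp
  define E where "E = (\<lambda>j. (\<lambda>i. if i = j then 1 else (0::complex))) ` {..4::nat}"
  have cardE: "card E \<le> 5" unfolding E_def
    using card_image_le[of "{..4::nat}"] by simp
  have SE: "S \<subseteq> cs.span E"
  proof
    fix y assume "y \<in> S"
    hence "\<forall>i>4. y i = 0"
      unfolding S_def using S0(1) B(1) TZ by (auto simp: cb_def Z_def)
    thus "y \<in> cs.span E" unfolding E_def by (rule supp_in_span)
  qed
  have "card S \<le> card E"
    using cs.independent_span_bound[OF _ indS SE] by (simp add: E_def)
  with cardS cardE show False by simp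
qed

lemma upt16: "[1..<6] = [1,2,3,4,5::nat]" by (simp add: upt_rec)

definition cc :: "nat \<Rightarrow> nat \<Rightarrow> nat \<Rightarrow> nat" where
  "cc a b k = filter (\<lambda>j. j \<noteq> a \<and> j \<noteq> b) [1..<6] ! k"

definition pf4B :: "(nat \<Rightarrow> nat \<Rightarrow> 'a::comm_ring_1) \<Rightarrow> (nat \<Rightarrow> nat \<Rightarrow> 'a) \<Rightarrow> nat \<Rightarrow> nat \<Rightarrow> nat \<Rightarrow> nat \<Rightarrow> 'a" where
  "pf4B M N a b c d = M a b * N c d + N a b * M c d - M a c * N b d - N a c * M b d + M a d * N b c + N a d * M b c"

lemma ab_cases:
  assumes "1 \<le> a" "a < b" "b \<le> (5::nat)"
  shows "(a = 1 \<and> b = 2) \<or> (a = 1 \<and> b = 3) \<or> (a = 1 \<and> b = 4) \<or> (a = 1 \<and> b = 5) \<or> (a = 2 \<and> b = 3)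
    \<or> (a = 2 \<and> b = 4) \<or> (a = 2 \<and> b = 5) \<or> (a = 3 \<and> b = 4) \<or> (a = 3 \<and> b = 5) \<or> (a = 4 \<and> b = 5)"
  using assms by presburger

lemma set15: "{1..5::nat} = {1,2,3,4,5}" by auto

lemma cc_facts:
  assumes "1 \<le> a" "a < b" "b \<le> (5::nat)"
  shows "{1..5} = {a,b,cc a b 0,cc a b 1,cc a b 2} \<and> distinct [a,b,cc a b 0,cc a b 1,cc a b 2]
     \<and> cc a b 0 < cc a b 1 \<and> cc a b 1 < cc a b 2"
  using ab_cases[OF assms] unfolding cc_def upt16 set15
  by (elim disjE conjE; simp add: insert_commute)

lemma pf4_sw1:
  fixes M :: "nat \<Rightarrow> nat \<Rightarrow> 'a::comm_ring_1"
  assumes alt: "\<And>i j. i \<in> {1..5} \<Longrightarrow> j \<in> {1..5} \<Longrightarrow> i < j \<Longrightarrow> M j i = - M i j"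
  and "a \<in> {1..5}" "b \<in> {1..5}" "c \<in> {1..5}" "d \<in> {1..5}" "b < a"
  shows "pf4 M a b c d = - pf4 M b a c d"
  using alt[of b a] assms(2-) by (simp add: pf4_def algebra_simps)
lemma pf4_sw2:
  fixes M :: "nat \<Rightarrow> nat \<Rightarrow> 'a::comm_ring_1"
  assumes alt: "\<And>i j. i \<in> {1..5} \<Longrightarrow> j \<in> {1..5} \<Longrightarrow> i < j \<Longrightarrow> M j i = - M i j"
  and "a \<in> {1..5}" "b \<in> {1..5}" "c \<in> {1..5}" "d \<in> {1..5}" "c < b"
  shows "pf4 M a b c d = - pf4 M a c b d"
  using alt[of c b] assms(2-) by (simp add: pf4_def algebra_simps)
lemma pf4_sw3:
  fixes M :: "nat \<Rightarrow> nat \<Rightarrow> 'a::comm_ring_1"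
  assumes alt: "\<And>i j. i \<in> {1..5} \<Longrightarrow> j \<in> {1..5} \<Longrightarrow> i < j \<Longrightarrow> M j i = - M i j"
  and "a \<in> {1..5}" "b \<in> {1..5}" "c \<in> {1..5}" "d \<in> {1..5}" "d < c"
  shows "pf4 M a b c d = - pf4 M a b d c"
  using alt[of d c] assms(2-) by (simp add: pf4_def algebra_simps)
lemma pf4B_sw1:
  fixes M N :: "nat \<Rightarrow> nat \<Rightarrow> 'a::comm_ring_1"
  assumes altM: "\<And>i j. i \<in> {1..5} \<Longrightarrow> j \<in> {1..5} \<Longrightarrow> i < j \<Longrightarrow> M j i = - M i j"
  and altN: "\<And>i j. i \<in> {1..5} \<Longrightarrow> j \<in> {1..5} \<Longrightarrow> i < j \<Longrightarrow> N j i = - N i j"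
  and "a \<in> {1..5}" "b \<in> {1..5}" "c \<in> {1..5}" "d \<in> {1..5}" "b < a"
  shows "pf4B M N a b c d = - pf4B M N b a c d"
  using altM[of b a] altN[of b a] assms(3-) by (simp add: pf4B_def algebra_simps)
lemma pf4B_sw2:
  fixes M N :: "nat \<Rightarrow> nat \<Rightarrow> 'a::comm_ring_1"
  assumes altM: "\<And>i j. i \<in> {1..5} \<Longrightarrow> j \<in> {1..5} \<Longrightarrow> i < j \<Longrightarrow> M j i = - M i j"
  and altN: "\<And>i j. i \<in> {1..5} \<Longrightarrow> j \<in> {1..5} \<Longrightarrow> i < j \<Longrightarrow> N j i = - N i j"
  and "a \<in> {1..5}" "b \<in> {1..5}" "c \<in> {1..5}" "d \<in> {1..5}" "c < b"
  shows "pf4B M N a b c d = - pf4B M N a c b d"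
  using altM[of c b] altN[of c b] assms(3-) by (simp add: pf4B_def algebra_simps)
lemma pf4B_sw3:
  fixes M N :: "nat \<Rightarrow> nat \<Rightarrow> 'a::comm_ring_1"
  assumes altM: "\<And>i j. i \<in> {1..5} \<Longrightarrow> j \<in> {1..5} \<Longrightarrow> i < j \<Longrightarrow> M j i = - M i j"
  and altN: "\<And>i j. i \<in> {1..5} \<Longrightarrow> j \<in> {1..5} \<Longrightarrow> i < j \<Longrightarrow> N j i = - N i j"
  and "a \<in> {1..5}" "b \<in> {1..5}" "c \<in> {1..5}" "d \<in> {1..5}" "d < c"
  shows "pf4B M N a b c d = - pf4B M N a b d c"
  using altM[of d c] altN[of d c] assms(3-) by (simp add: pf4B_def algebra_simps)

lemma pf_cases:
  fixes M :: "nat \<Rightarrow> nat \<Rightarrow> 'a::comm_ring_1"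
  assumes alt: "\<And>i j. i \<in> {1..5} \<Longrightarrow> j \<in> {1..5} \<Longrightarrow> i < j \<Longrightarrow> M j i = - M i j"
  and z: "\<And>e. e \<in> {1..5} \<Longrightarrow> subpf M e = 0"
  and ab: "1 \<le> a" "a < b" "b \<le> 5"
  shows "pf4 M a b (cc a b 0) (cc a b 1) = 0 \<and> pf4 M a b (cc a b 0) (cc a b 2) = 0 \<and> pf4 M a b (cc a b 1) (cc a b 2) = 0"
proof -
  have z1: "pf4 M 2 3 4 5 = 0" using z[of 1] unfolding subpf_def upt16 by simp
  have z2: "pf4 M 1 3 4 5 = 0" using z[of 2] unfolding subpf_def upt16 by simp
  have z3: "pf4 M 1 2 4 5 = 0" using z[of 3] unfolding subpf_def upt16 by simp
  have z4: "pf4 M 1 2 3 5 = 0" using z[of 4] unfolding subpf_def upt16 by simp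
  have z5: "pf4 M 1 2 3 4 = 0" using z[of 5] unfolding subpf_def upt16 by simp
  note zz = z1 z2 z3 z4 z5
  note sw = pf4_sw1[OF alt, simplified] pf4_sw2[OF alt, simplified] pf4_sw3[OF alt, simplified]
  show ?thesis using ab_cases[OF ab] unfolding cc_def upt16
    by (elim disjE conjE; simp add: sw zz[unfolded One_nat_def])
qed

lemma pfB_cases:
  fixes M N :: "nat \<Rightarrow> nat \<Rightarrow> 'a::comm_ring_1"
  assumes altM: "\<And>i j. i \<in> {1..5} \<Longrightarrow> j \<in> {1..5} \<Longrightarrow> i < j \<Longrightarrow> M j i = - M i j"
  and altN: "\<And>i j. i \<in> {1..5} \<Longrightarrow> j \<in> {1..5} \<Longrightarrow> i < j \<Longrightarrow> N j i = - N i j"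
  and z1: "pf4B M N 2 3 4 5 = 0" and z2: "pf4B M N 1 3 4 5 = 0" and z3: "pf4B M N 1 2 4 5 = 0"
  and z4: "pf4B M N 1 2 3 5 = 0" and z5: "pf4B M N 1 2 3 4 = 0"
  and ab: "1 \<le> a" "a < b" "b \<le> 5"
  shows "pf4B M N a b (cc a b 0) (cc a b 1) = 0 \<and> pf4B M N a b (cc a b 0) (cc a b 2) = 0 \<and> pf4B M N a b (cc a b 1) (cc a b 2) = 0"
proof -
  note sw = pf4B_sw1[OF altM altN, simplified] pf4B_sw2[OF altM altN, simplified] pf4B_sw3[OF altM altN, simplified]
  show ?thesis using ab_cases[OF ab] unfolding cc_def upt16
    by (elim disjE conjE; simp add: sw z1[unfolded One_nat_def] z2[unfolded One_nat_def] z3[unfolded One_nat_def] z4[unfolded One_nat_def] z5[unfolded One_nat_def])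
qed


definition bil :: "(nat \<Rightarrow> nat \<Rightarrow> complex) \<Rightarrow> (nat \<Rightarrow> complex) \<Rightarrow> (nat \<Rightarrow> complex) \<Rightarrow> complex" where
  "bil X u w = (\<Sum>a\<in>{1..5}. \<Sum>b\<in>{1..5}. u a * X a b * w b)"

definition altm :: "(nat \<Rightarrow> nat \<Rightarrow> complex) \<Rightarrow> bool" where
  "altm X \<longleftrightarrow> (\<forall>i\<in>{1..5}. \<forall>j\<in>{1..5}. X j i = - X i j)"

lemma altm_diag: "altm X \<Longrightarrow> i \<in> {1..5} \<Longrightarrow> X i i = 0"
proof -
  assume "altm X" "i \<in> {1..5}"
  hence "X i i = - X i i" unfolding altm_def by blast
  hence "2 * X i i = 0" by simp
  thus ?thesis by simp
qed

lemma altm_app: "altm X \<Longrightarrow> i \<in> {1..5} \<Longrightarrow> j \<in> {1..5} \<Longrightarrow> X j i = - X i j"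
  unfolding altm_def by blast

lemma bil_swap: "altm X \<Longrightarrow> bil X s r = - bil X r s"
proof -
  assume X: "altm X"
  have "bil X s r = (\<Sum>b\<in>{1..5}. \<Sum>a\<in>{1..5}. s a * X a b * r b)"
    unfolding bil_def by (rule sum.swap)
  also have "\<dots> = (\<Sum>b\<in>{1..5}. \<Sum>a\<in>{1..5}. - (r b * X b a * s a))"
  proof (intro sum.cong refl)
    fix b a assume "b \<in> {1..5::nat}" "a \<in> {1..5::nat}"
    hence "X a b = - X b a" using X unfolding altm_def by blast
    thus "s a * X a b * r b = - (r b * X b a * s a)" by simp
  qed
  also have "\<dots> = - bil X r s" by (simp add: bil_def sum_negf)
  finally show ?thesis .
qed

lemma bil_self: "altm X \<Longrightarrow> bil X r r = 0"
  using bil_swap[of X r r] by simp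

lemma bil_comb: "bil X (\<lambda>i. x1 * r i + x2 * s i) (\<lambda>i. y1 * r i + y2 * s i)
   = x1 * y1 * bil X r r + x1 * y2 * bil X r s + x2 * y1 * bil X s r + x2 * y2 * bil X s s"
proof -
  have e: "(x1 * r a + x2 * s a) * X a b * (y1 * r b + y2 * s b) =
     x1 * y1 * (r a * X a b * r b) + x1 * y2 * (r a * X a b * s b) + x2 * y1 * (s a * X a b * r b) + x2 * y2 * (s a * X a b * s b)"
    for a b by (simp add: algebra_simps)
  show ?thesis unfolding bil_def e sum.distrib sum_distrib_left ..
qed

lemma bil_comb_alt: "altm X \<Longrightarrow> bil X (\<lambda>i. x1 * r i + x2 * s i) (\<lambda>i. y1 * r i + y2 * s i)
   = (x1 * y2 - x2 * y1) * bil X r s"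
proof -
  assume X: "altm X"
  have "bil X s r = - bil X r s" by (rule bil_swap[OF X])
  thus ?thesis using bil_self[OF X, of r] bil_self[OF X, of s] by (simp add: bil_comb algebra_simps)
qed

lemma bil_lin_mat: "(\<Sum>l\<in>L. c l * bil (X l) u w) = bil (\<lambda>a b. \<Sum>l\<in>L. c l * X l a b) u w"
proof -
  have "(\<Sum>l\<in>L. c l * bil (X l) u w) = (\<Sum>l\<in>L. \<Sum>a\<in>{1..5}. \<Sum>b\<in>{1..5}. c l * (u a * X l a b * w b))"
    unfolding bil_def by (simp add: sum_distrib_left)
  also have "\<dots> = (\<Sum>a\<in>{1..5}. \<Sum>l\<in>L. \<Sum>b\<in>{1..5}. c l * (u a * X l a b * w b))"
    by (rule sum.swap)
  also have "\<dots> = (\<Sum>a\<in>{1..5}. \<Sum>b\<in>{1..5}. \<Sum>l\<in>L. c l * (u a * X l a b * w b))"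
    by (intro sum.cong refl) (rule sum.swap)
  also have "\<dots> = bil (\<lambda>a b. \<Sum>l\<in>L. c l * X l a b) u w"
    unfolding bil_def by (intro sum.cong refl) (simp add: sum_distrib_left sum_distrib_right algebra_simps)
  finally show ?thesis .
qed

lemma bil_lin2: "bil (\<lambda>a b. (\<Sum>l\<in>L. X l a b * v l) + t * Y a b) u w
   = (\<Sum>l\<in>L. v l * bil (X l) u w) + t * bil Y u w"
proof -
  have "bil (\<lambda>a b. (\<Sum>l\<in>L. X l a b * v l) + t * Y a b) u w
      = bil (\<lambda>a b. (\<Sum>l\<in>L. v l * X l a b)) u w + t * bil Y u w"
  proof -
    have e: "u a * ((\<Sum>l\<in>L. X l a b * v l) + t * Y a b) * w b = u a * (\<Sum>l\<in>L. v l * X l a b) * w b + t * (u a * Y a b * w b)" for a b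
      by (simp add: algebra_simps)
    show ?thesis unfolding bil_def e sum.distrib sum_distrib_left ..
  qed
  thus ?thesis by (simp add: bil_lin_mat)
qed

lemma bil_kerR: "(\<forall>a\<in>{1..5}. (\<Sum>b\<in>{1..5}. X a b * w b) = 0) \<Longrightarrow> bil X u w = 0"
  unfolding bil_def by (simp add: mult.assoc sum_distrib_left[symmetric])

lemma bil_kerL: "(\<forall>b\<in>{1..5}. (\<Sum>a\<in>{1..5}. u a * X a b) = 0) \<Longrightarrow> bil X u w = 0"
proof -
  assume h: "\<forall>b\<in>{1..5}. (\<Sum>a\<in>{1..5}. u a * X a b) = 0"
  have "bil X u w = (\<Sum>b\<in>{1..5}. (\<Sum>a\<in>{1..5}. u a * X a b) * w b)"
      unfolding bil_def sum_distrib_right by (rule sum.swap)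
  also have "\<dots> = 0" using h by simp
  finally show ?thesis .
qed

lemma sum5:
  assumes "{1..5} = {a,b,c1,c2,c3::nat}" "distinct [a,b,c1,c2,c3]"
  shows "(\<Sum>i\<in>{1..5}. f i) = f a + f b + f c1 + f c2 + (f c3 :: complex)"
  using assms by simp


definition kv :: "(nat \<Rightarrow> nat \<Rightarrow> complex) \<Rightarrow> nat \<Rightarrow> nat \<Rightarrow> nat \<Rightarrow> nat \<Rightarrow> complex" where
  "kv M a b c = (\<lambda>i. if i = c then 1 else if i = a then M b c / M a b else if i = b then - M a c / M a b else 0)"

lemma idt: fixes m ncd nac nbc nad nab nbd bd ad bc ac cd :: complex assumes "m \<noteq> 0"
  shows "m * ((ncd + bd/m * (-nac) - ad/m*(-nbc)) + bc/m*(nad + bd/m*0 - ad/m*nab) - ac/m*(nbd + bd/m*(-nab) - ad/m*0))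
   - (m*ncd + nab*cd - ac*nbd - nac*bd + ad*nbc + nad*bc) = - nab * (m*cd - ac*bd + ad*bc)/m"
  using assms by (simp add: field_simps)

locale gset =
  fixes a b c1 c2 c3 :: nat and M :: "nat \<Rightarrow> nat \<Rightarrow> complex"
  assumes S: "{1..5} = {a,b,c1,c2,c3}" and D: "distinct [a,b,c1,c2,c3]"
    and altM: "altm M" and Mab: "M a b \<noteq> 0"
    and P: "\<And>c d. c \<in> {c1,c2,c3} \<Longrightarrow> d \<in> {c1,c2,c3} \<Longrightarrow> pf4 M a b c d = 0"
begin

lemma inS: "a \<in> {1..5}" "b \<in> {1..5}" "c1 \<in> {1..5}" "c2 \<in> {1..5}" "c3 \<in> {1..5}"
  using S by auto

lemma altM': "i \<in> {1..5} \<Longrightarrow> j \<in> {1..5} \<Longrightarrow> M j i = - M i j"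
  using altM unfolding altm_def by blast

lemma pf_all:
  assumes c: "c \<in> {c1,c2,c3}" and d: "d \<in> {1..5}"
  shows "pf4 M a b c d = 0"
proof -
  have cS: "c \<in> {1..5}" using c inS by blast
  have e1: "M b a = - M a b" by (rule altM'[OF inS(1) inS(2)])
  have e2: "M c a = - M a c" by (rule altM'[OF inS(1) cS])
  have e3: "M c b = - M b c" by (rule altM'[OF inS(2) cS])
  have e4: "M a a = 0" by (rule altm_diag[OF altM inS(1)])
  have e5: "M b b = 0" by (rule altm_diag[OF altM inS(2)])
  have "d \<in> {a,b,c1,c2,c3}" using d S by blast
  hence "d = a \<or> d = b \<or> d \<in> {c1,c2,c3}" by blast
  thus ?thesis
  proof (elim disjE)
    assume da: "d = a"
    have "pf4 M a b c d = M a b * (- M a c) - M a c * (- M a b) + 0 * M b c"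
      unfolding da pf4_def e1 e2 e4 ..
    also have "\<dots> = 0" by (simp add: algebra_simps)
    finally show ?thesis .
  next
    assume db: "d = b"
    have "pf4 M a b c d = M a b * (- M b c) - M a c * 0 + M a b * M b c"
      unfolding db pf4_def e3 e5 ..
    also have "\<dots> = 0" by (simp add: algebra_simps)
    finally show ?thesis .
  next
    assume "d \<in> {c1,c2,c3}" thus ?thesis using P c by blast
  qed
qed

lemma sumkv:
  assumes c: "c \<in> {c1,c2,c3}"
  shows "(\<Sum>j\<in>{1..5}. kv M a b c j * g j) = g c + M b c / M a b * g a - M a c / M a b * g b"
  using c D unfolding sum5[OF S D] kv_def by auto

lemma sumkv':
  assumes c: "c \<in> {c1,c2,c3}"
  shows "(\<Sum>j\<in>{1..5}. g j * kv M a b c j) = g c + M b c / M a b * g a - M a c / M a b * g b"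
  using sumkv[OF c, of g] by (simp add: mult.commute)

lemma kv_ker:
  assumes c: "c \<in> {c1,c2,c3}" and d: "d \<in> {1..5}"
  shows "(\<Sum>j\<in>{1..5}. M d j * kv M a b c j) = 0"
proof -
  have cS: "c \<in> {1..5}" using c inS by auto
  have p: "pf4 M a b c d = 0" by (rule pf_all[OF c d])
  have "M a b * (M d c + M b c / M a b * M d a - M a c / M a b * M d b) = - pf4 M a b c d"
    using Mab altM'[OF cS d] altM'[OF inS(1) d] altM'[OF inS(2) d]
    by (simp add: pf4_def field_simps)
  with p Mab show ?thesis unfolding sumkv'[OF c] by simp
qed

lemma kv_bil:
  assumes c: "c \<in> {c1,c2,c3}" and d: "d \<in> {c1,c2,c3}" and cd: "c \<noteq> d" and N: "altm N"
  shows "M a b * bil N (kv M a b c) (kv M a b d) = pf4B M N a b c d"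
proof -
  have cS: "c \<in> {1..5}" using c inS by auto
  have dS: "d \<in> {1..5}" using d inS by auto
  have inner: "(\<Sum>j\<in>{1..5}. u * N i j * kv M a b d j) = u * (N i d + M b d / M a b * N i a - M a d / M a b * N i b)" for u i
  proof -
    have "(\<Sum>j\<in>{1..5}. u * N i j * kv M a b d j) = u * (\<Sum>j\<in>{1..5}. N i j * kv M a b d j)"
      by (simp add: sum_distrib_left mult.assoc)
    thus ?thesis using sumkv'[OF d, of "N i"] by simp
  qed
  define Q where "Q = (N c d + M b d / M a b * N c a - M a d / M a b * N c b)
     + M b c / M a b * (N a d + M b d / M a b * N a a - M a d / M a b * N a b)
     - M a c / M a b * (N b d + M b d / M a b * N b a - M a d / M a b * N b b)"
  have bq: "bil N (kv M a b c) (kv M a b d) = Q"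
    unfolding bil_def inner Q_def
    using sumkv[OF c, of "\<lambda>i. N i d + M b d / M a b * N i a - M a d / M a b * N i b"] by simp
  have Naa: "N a a = 0" "N b b = 0" using altm_diag[OF N] inS by auto
  have Ns: "N b a = - N a b" "N c a = - N a c" "N c b = - N b c"
    using altm_app[OF N inS(1) inS(2)] altm_app[OF N inS(1) cS] altm_app[OF N inS(2) cS] by auto
  have id: "M a b * Q - pf4B M N a b c d = - N a b * pf4 M a b c d / M a b"
    unfolding Q_def pf4_def pf4B_def Naa Ns by (rule idt[OF Mab])
  have p: "pf4 M a b c d = 0" by (rule pf_all[OF c dS])
  have "M a b * Q - pf4B M N a b c d = 0" unfolding id p by simp
  thus ?thesis unfolding bq by simp
qed

end


lemma ech1:
  fixes r s :: "nat \<Rightarrow> complex"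
  assumes minor: "\<exists>i\<in>{1..5}. \<exists>j\<in>{1..5}. r i * s j - r j * s i \<noteq> 0"
    and sJ: "s (Max {j\<in>{1..5::nat}. r j \<noteq> 0 \<or> s j \<noteq> 0}) \<noteq> 0"
  shows "\<exists>x1 x2 y1 y2 I J. 1 \<le> I \<and> I < J \<and> J \<le> (5::nat) \<and>
     x1 * r I + x2 * s I = 1 \<and> y1 * r J + y2 * s J = 1 \<and>
     (\<forall>j\<in>{1..5}. I < j \<longrightarrow> x1 * r j + x2 * s j = 0) \<and> (\<forall>j\<in>{1..5}. J < j \<longrightarrow> y1 * r j + y2 * s j = 0)"
proof -
  define S where "S = {j\<in>{1..5::nat}. r j \<noteq> 0 \<or> s j \<noteq> 0}"
  obtain i0 j0 where ij: "i0 \<in> {1..5}" "j0 \<in> {1..5}" "r i0 * s j0 - r j0 * s i0 \<noteq> 0"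
    using minor by blast
  have "i0 \<in> S" using ij unfolding S_def by auto
  hence Sne: "S \<noteq> {}" by blast
  have fin: "finite S" unfolding S_def by simp
  define J where "J = Max S"
  have JS: "J \<in> S" unfolding J_def using Max_in[OF fin Sne] .
  have sJ': "s J \<noteq> 0" using sJ unfolding J_def S_def .
  have Jmax: "r j = 0 \<and> s j = 0" if "j \<in> {1..5}" "J < j" for j
  proof (rule ccontr)
    assume "\<not> (r j = 0 \<and> s j = 0)"
    hence "j \<in> S" using that unfolding S_def by auto
    hence "j \<le> J" unfolding J_def using Max_ge[OF fin] by blast
    with that show False by simp
  qed
  define t where "t = r J / s J"
  define r0 where "r0 = (\<lambda>i. r i - t * s i)"
  have r0J: "r0 J = 0" unfolding r0_def t_def using sJ' by simp
  have ex: "\<exists>i\<in>{1..5}. r0 i \<noteq> 0"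
  proof (rule ccontr)
    assume "\<not> ?thesis"
    hence h: "\<forall>i\<in>{1..5}. r i = t * s i" unfolding r0_def by auto
    have "r i0 * s j0 - r j0 * s i0 = t * s i0 * s j0 - t * s j0 * s i0"
      using h ij(1,2) by simp
    also have "\<dots> = 0" by simp
    finally show False using ij(3) by simp
  qed
  define S2 where "S2 = {i\<in>{1..5::nat}. r0 i \<noteq> 0}"
  have S2ne: "S2 \<noteq> {}" using ex unfolding S2_def by auto
  have fin2: "finite S2" unfolding S2_def by simp
  define I where "I = Max S2"
  have IS: "I \<in> S2" unfolding I_def using Max_in[OF fin2 S2ne] .
  have r0I: "r0 I \<noteq> 0" and I15: "I \<in> {1..5}" using IS unfolding S2_def by auto
  have Imax: "r0 j = 0" if "j \<in> {1..5}" "I < j" for j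
  proof (rule ccontr)
    assume "r0 j \<noteq> 0"
    hence "j \<in> S2" using that unfolding S2_def by auto
    hence "j \<le> I" unfolding I_def using Max_ge[OF fin2] by blast
    with that show False by simp
  qed
  have J15: "J \<in> {1..5}" using JS unfolding S_def by auto
  have "I \<le> J"
  proof (rule ccontr)
    assume "\<not> I \<le> J"
    hence "J < I" by simp
    from Jmax[OF I15 this] have "r0 I = 0" unfolding r0_def by simp
    with r0I show False by simp
  qed
  moreover have "I \<noteq> J" using r0J r0I by auto
  ultimately have IJ: "I < J" by simp
  show ?thesis
  proof (intro exI conjI)
    show "1 \<le> I" using I15 by simp
    show "I < J" by (rule IJ)
    show "J \<le> 5" using J15 by simp
    have A: "1 / r0 I * r I + (- t / r0 I) * s I = (r I - t * s I) / r0 I"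
      by (simp add: diff_divide_distrib)
    have B: "r I - t * s I = r0 I" unfolding r0_def by simp
    show "1 / r0 I * r I + (- t / r0 I) * s I = 1" unfolding A B using r0I by simp
    show "0 * r J + 1 / s J * s J = 1" using sJ' by simp
    show "\<forall>j\<in>{1..5}. I < j \<longrightarrow> 1 / r0 I * r j + (- t / r0 I) * s j = 0"
    proof (intro ballI impI)
      fix j assume "j \<in> {1..5::nat}" "I < j"
      from Imax[OF this] have "r j - t * s j = 0" unfolding r0_def by simp
      thus "1 / r0 I * r j + (- t / r0 I) * s j = 0"
        using r0I by (simp add: field_simps)
    qed
    show "\<forall>j\<in>{1..5}. J < j \<longrightarrow> 0 * r j + 1 / s J * s j = 0"
      using Jmax by simp
  qed
qed

lemma ech:
  fixes r s :: "nat \<Rightarrow> complex"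
  assumes minor: "\<exists>i\<in>{1..5}. \<exists>j\<in>{1..5}. r i * s j - r j * s i \<noteq> 0"
  shows "\<exists>x1 x2 y1 y2 I J. 1 \<le> I \<and> I < J \<and> J \<le> (5::nat) \<and>
     x1 * r I + x2 * s I = 1 \<and> y1 * r J + y2 * s J = 1 \<and>
     (\<forall>j\<in>{1..5}. I < j \<longrightarrow> x1 * r j + x2 * s j = 0) \<and> (\<forall>j\<in>{1..5}. J < j \<longrightarrow> y1 * r j + y2 * s j = 0)"
proof (cases "s (Max {j\<in>{1..5::nat}. r j \<noteq> 0 \<or> s j \<noteq> 0}) \<noteq> 0")
  case True
  show ?thesis by (rule ech1[OF minor True])
next
  case False
  define S where "S = {j\<in>{1..5::nat}. r j \<noteq> 0 \<or> s j \<noteq> 0}"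
  obtain i0 j0 where ij: "i0 \<in> {1..5}" "j0 \<in> {1..5}" "r i0 * s j0 - r j0 * s i0 \<noteq> 0"
    using minor by blast
  have "i0 \<in> S" using ij unfolding S_def by auto
  hence Sne: "S \<noteq> {}" by blast
  have fin: "finite S" unfolding S_def by simp
  have "Max S \<in> S" using Max_in[OF fin Sne] .
  hence rM: "r (Max S) \<noteq> 0" using False unfolding S_def by auto
  have S': "{j\<in>{1..5::nat}. s j \<noteq> 0 \<or> r j \<noteq> 0} = S" unfolding S_def by auto
  have minor': "\<exists>i\<in>{1..5}. \<exists>j\<in>{1..5}. s i * r j - s j * r i \<noteq> 0"
    using ij by (intro bexI[of _ i0] bexI[of _ j0]) (auto simp: algebra_simps)
  have "r (Max {j\<in>{1..5::nat}. s j \<noteq> 0 \<or> r j \<noteq> 0}) \<noteq> 0" unfolding S' by (rule rM)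
  from ech1[OF minor' this] obtain x1 x2 y1 y2 I J where
    h: "1 \<le> I \<and> I < J \<and> J \<le> (5::nat) \<and>
     x1 * s I + x2 * r I = 1 \<and> y1 * s J + y2 * r J = 1 \<and>
     (\<forall>j\<in>{1..5}. I < j \<longrightarrow> x1 * s j + x2 * r j = 0) \<and> (\<forall>j\<in>{1..5}. J < j \<longrightarrow> y1 * s j + y2 * r j = 0)"
    by blast
  show ?thesis
    apply (rule exI[of _ x2], rule exI[of _ x1], rule exI[of _ y2], rule exI[of _ y1], rule exI[of _ I], rule exI[of _ J])
    using h by (simp add: add.commute)
qed

lemma dec3: "\<exists>u1 u2 u3 w1 w2 w3::complex. u1*w2 - u2*w1 = l1 \<and> u1*w3 - u3*w1 = l2 \<and> u2*w3 - u3*w2 = l3"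
proof (cases "l1 = 0")
  case True
  show ?thesis
    by (rule exI[of _ l2], rule exI[of _ l3], rule exI[of _ 0], rule exI[of _ 0], rule exI[of _ 0], rule exI[of _ 1])
       (simp add: True)
next
  case False
  show ?thesis
    by (rule exI[of _ 1], rule exI[of _ 0], rule exI[of _ "- l3 / l1"], rule exI[of _ 0], rule exI[of _ l1], rule exI[of _ l2])
       (use False in \<open>simp add: field_simps\<close>)
qed

lemma bil_comb3_alt:
  assumes X: "altm X"
  shows "bil X (\<lambda>i. u1*k1 i + u2*k2 i + u3*k3 i) (\<lambda>i. w1*k1 i + w2*k2 i + w3*k3 i)
   = (u1*w2-u2*w1)*bil X k1 k2 + (u1*w3-u3*w1)*bil X k1 k3 + (u2*w3-u3*w2)*bil X k2 k3"
proof -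
  have e: "(u1*k1 a + u2*k2 a + u3*k3 a) * X a b * (w1*k1 b + w2*k2 b + w3*k3 b) =
     u1*w1*(k1 a * X a b * k1 b) + u1*w2*(k1 a * X a b * k2 b) + u1*w3*(k1 a * X a b * k3 b)
   + u2*w1*(k2 a * X a b * k1 b) + u2*w2*(k2 a * X a b * k2 b) + u2*w3*(k2 a * X a b * k3 b)
   + u3*w1*(k3 a * X a b * k1 b) + u3*w2*(k3 a * X a b * k2 b) + u3*w3*(k3 a * X a b * k3 b)" for a b
    by (simp add: algebra_simps)
  have "bil X (\<lambda>i. u1*k1 i + u2*k2 i + u3*k3 i) (\<lambda>i. w1*k1 i + w2*k2 i + w3*k3 i) =
     u1*w1*bil X k1 k1 + u1*w2*bil X k1 k2 + u1*w3*bil X k1 k3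
   + u2*w1*bil X k2 k1 + u2*w2*bil X k2 k2 + u2*w3*bil X k2 k3
   + u3*w1*bil X k3 k1 + u3*w2*bil X k3 k2 + u3*w3*bil X k3 k3"
    unfolding bil_def e sum.distrib sum_distrib_left ..
  moreover have "bil X k2 k1 = - bil X k1 k2" "bil X k3 k1 = - bil X k1 k3" "bil X k3 k2 = - bil X k2 k3"
    by (rule bil_swap[OF X])+
  moreover have "bil X k1 k1 = 0" "bil X k2 k2 = 0" "bil X k3 k3 = 0"
    by (rule bil_self[OF X])+
  ultimately show ?thesis by (simp add: algebra_simps)
qed



lemma coeff_mult_1: "coeff (x * y) 1 = coeff x 0 * coeff y 1 + coeff x 1 * coeff (y :: complex poly) 0"
  by (simp add: coeff_mult)

lemma coeff_mult_S: "coeff (x * y) (Suc 0) = coeff x 0 * coeff y (Suc 0) + coeff x (Suc 0) * coeff (y :: complex poly) 0"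
  using coeff_mult_1[of x y] by simp

lemma coeff_mult_0: "coeff (x * y) 0 = coeff x 0 * coeff (y :: complex poly) 0"
  by (simp add: coeff_mult)

lemma coeff_pf4_1: "coeff (pf4 (X :: nat \<Rightarrow> nat \<Rightarrow> complex poly) a b c d) 1 = pf4B (\<lambda>i j. coeff (X i j) 0) (\<lambda>i j. coeff (X i j) 1) a b c d"
  unfolding pf4_def pf4B_def by (simp add: coeff_mult_S algebra_simps)

lemma coeff_lin: "coeff ([:x, y:] * [:p, w:]) 0 = x * p" "coeff ([:x, y:] * [:p, w:]) 1 = x * w + y * p"
  by (simp_all add: coeff_mult_0 coeff_mult_S algebra_simps)

lemma coeffE0: "coeff (evalA_dual A t p w i j) 0 = evalA0 A p i j"
  unfolding evalA_dual_def evalA0_def red0_def by (simp add: coeff_sum coeff_lin mult.commute)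

lemma coeffE1: "coeff (evalA_dual A t p w i j) 1 =
   (\<Sum>l\<in>{1..4}. fst (A l i j) * w l) + t * (\<Sum>l\<in>{1..4}. snd (A l i j) * p l)"
  unfolding evalA_dual_def by (simp add: coeff_sum coeff_lin sum.distrib sum_distrib_left algebra_simps)

lemma subpf_coeff:
  fixes X :: "nat \<Rightarrow> nat \<Rightarrow> complex poly"
  defines "M \<equiv> (\<lambda>i j. coeff (X i j) 0)" and "N \<equiv> (\<lambda>i j. coeff (X i j) 1)"
  shows "coeff (subpf X 1) 1 = pf4B M N 2 3 4 5" "coeff (subpf X 2) 1 = pf4B M N 1 3 4 5"
    "coeff (subpf X 3) 1 = pf4B M N 1 2 4 5" "coeff (subpf X 4) 1 = pf4B M N 1 2 3 5"
    "coeff (subpf X 5) 1 = pf4B M N 1 2 3 4"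
  unfolding subpf_def upt16 M_def N_def by (simp_all add: coeff_pf4_1[unfolded One_nat_def])




lemma altm_fstA:
  assumes A: "alternating_quad A" and l: "l \<in> {1..4}"
  shows "altm (\<lambda>i j. fst (A l i j))" "altm (\<lambda>i j. snd (A l i j))"
proof -
  have h: "A l j i = (- fst (A l i j), - snd (A l i j))" if "i \<in> {1..5}" "j \<in> {1..5}" for i j
    using A l that unfolding alternating_quad_def by blast
  have hf: "fst (A l j i) = - fst (A l i j)" "snd (A l j i) = - snd (A l i j)"
    if "i \<in> {1..5}" "j \<in> {1..5}" for i j
    using h[OF that] by simp_all
  show "altm (\<lambda>i j. fst (A l i j))" unfolding altm_def using hf(1) by blast
  show "altm (\<lambda>i j. snd (A l i j))" unfolding altm_def using hf(2) by blast
qed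

lemma altm_sum:
  assumes "\<And>l. l \<in> L \<Longrightarrow> altm (X l)"
  shows "altm (\<lambda>i j. \<Sum>l\<in>L. X l i j * c l)"
  unfolding altm_def
proof (intro ballI)
  fix i j assume ij: "i \<in> {1..5::nat}" "j \<in> {1..5::nat}"
  have "(\<Sum>l\<in>L. X l j i * c l) = (\<Sum>l\<in>L. - (X l i j * c l))"
  proof (intro sum.cong refl)
    fix l assume "l \<in> L"
    from altm_app[OF assms[OF this] ij] show "X l j i * c l = - (X l i j * c l)" by simp
  qed
  thus "(\<Sum>l\<in>L. X l j i * c l) = - (\<Sum>l\<in>L. X l i j * c l)" by (simp add: sum_negf)
qed

lemma altm_lin:
  assumes "altm X" "altm Y"
  shows "altm (\<lambda>i j. X i j + t * Y i j)"
  unfolding altm_def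
proof (intro ballI)
  fix i j assume ij: "i \<in> {1..5::nat}" "j \<in> {1..5::nat}"
  show "X j i + t * Y j i = - (X i j + t * Y i j)"
    using altm_app[OF assms(1) ij] altm_app[OF assms(2) ij] by simp
qed

lemma altm_cond:
  assumes "altm X"
  shows "\<And>i j. i \<in> {1..5} \<Longrightarrow> j \<in> {1..5} \<Longrightarrow> i < j \<Longrightarrow> X j i = - X i j"
  using altm_app[OF assms] by blast

lemma act_fst: "fst (act g4 g5 A k i j) = (\<Sum>l\<in>{1..4}. g4 k l * bil (\<lambda>a b. fst (A l a b)) (g5 i) (g5 j))"
  unfolding act_def bil_def by simp

lemma act_snd: "snd (act g4 g5 A k i j) = (\<Sum>l\<in>{1..4}. g4 k l * bil (\<lambda>a b. snd (A l a b)) (g5 i) (g5 j))"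
  unfolding act_def bil_def by simp

lemma bil_delta:
  assumes "i \<in> {1..5}" "j \<in> {1..5}"
  shows "bil X (\<lambda>a. if i = a then 1 else 0) (\<lambda>b. if j = b then 1 else 0) = X i j"
proof -
  have e: "(if i = a then 1 else 0) * X a b * (if j = b then 1 else 0) = (if a = i then (if b = j then X i j else 0) else 0)" for a b
    by simp
  have "bil X (\<lambda>a. if i = a then 1 else 0) (\<lambda>b. if j = b then 1 else 0)
      = (\<Sum>a\<in>{1..5}. if a = i then (\<Sum>b\<in>{1..5}. if b = j then X i j else 0) else 0)"
    unfolding bil_def e
  proof (intro sum.cong refl)
    fix a show "(\<Sum>b\<in>{1..5}. if a = i then if b = j then X i j else 0 else 0) =
        (if a = i then \<Sum>b\<in>{1..5}. if b = j then X i j else 0 else 0)"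
      by (cases "a = i") simp_all
  qed
  also have "\<dots> = X i j" using assms by (simp only: sum.delta finite_atLeastAtMost if_True)
  finally show ?thesis .
qed

lemma P3:
  assumes M: "altm M" and inS: "c1 \<in> {1..5}" "c2 \<in> {1..5}" "c3 \<in> {1..5}"
    and h: "pf4 M a b c1 c2 = 0" "pf4 M a b c1 c3 = 0" "pf4 M a b c2 c3 = 0"
    and c: "c \<in> {c1,c2,c3}" and d: "d \<in> {c1,c2,c3}"
  shows "pf4 M a b c d = 0"
proof -
  have sw: "pf4 M a b d' c' = - pf4 M a b c' d'" if "c' \<in> {1..5}" "d' \<in> {1..5}" for c' d'
  proof -
    have "M d' c' = - M c' d'" using altm_app[OF M that] .
    thus ?thesis unfolding pf4_def by (simp add: algebra_simps)
  qed
  have dg: "pf4 M a b c' c' = 0" if "c' \<in> {1..5}" for c'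
    using altm_diag[OF M that] unfolding pf4_def by (simp add: algebra_simps)
  have s21: "pf4 M a b c2 c1 = 0" using sw[OF inS(1) inS(2)] h(1) by simp
  have s31: "pf4 M a b c3 c1 = 0" using sw[OF inS(1) inS(3)] h(2) by simp
  have s32: "pf4 M a b c3 c2 = 0" using sw[OF inS(2) inS(3)] h(3) by simp
  have d1: "pf4 M a b c1 c1 = 0" "pf4 M a b c2 c2 = 0" "pf4 M a b c3 c3 = 0"
    using dg inS by auto
  have "c = c1 \<or> c = c2 \<or> c = c3" "d = c1 \<or> d = c2 \<or> d = c3" using c d by auto
  thus ?thesis using h s21 s31 s32 d1 by (elim disjE) (simp_all only:)
qed

lemma kerc:
  assumes "(\<Sum>j\<in>{1..5}. M d j * k1 j) = 0" "(\<Sum>j\<in>{1..5}. M d j * k2 j) = 0" "(\<Sum>j\<in>{1..5}. M d j * k3 j) = 0"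
  shows "(\<Sum>j\<in>{1..5::nat}. M d j * (x * k1 j + y * k2 j + z * k3 j)) = (0::complex)"
proof -
  have "(\<Sum>j\<in>{1..5::nat}. M d j * (x * k1 j + y * k2 j + z * k3 j)) =
     x * (\<Sum>j\<in>{1..5}. M d j * k1 j) + y * (\<Sum>j\<in>{1..5}. M d j * k2 j) + z * (\<Sum>j\<in>{1..5}. M d j * k3 j)"
  proof -
    have e: "M d j * (x * k1 j + y * k2 j + z * k3 j) = x * (M d j * k1 j) + y * (M d j * k2 j) + z * (M d j * k3 j)" for j
      by (simp add: algebra_simps)
    show ?thesis unfolding e sum.distrib sum_distrib_left ..
  qed
  thus ?thesis using assms by simp
qed

lemma kerL:
  assumes M: "altm M" and k: "\<And>d. d \<in> {1..5} \<Longrightarrow> (\<Sum>j\<in>{1..5}. M d j * r j) = 0"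
  shows "\<forall>b\<in>{1..5}. (\<Sum>a\<in>{1..5}. r a * M a b) = 0"
proof
  fix b assume b: "b \<in> {1..5::nat}"
  have "(\<Sum>a\<in>{1..5}. r a * M a b) = (\<Sum>a\<in>{1..5}. - (M b a * r a))"
  proof (intro sum.cong refl)
    fix a assume "a \<in> {1..5::nat}"
    from altm_app[OF M b this] show "r a * M a b = - (M b a * r a)" by simp
  qed
  also have "\<dots> = - (\<Sum>a\<in>{1..5}. M b a * r a)" by (simp add: sum_negf)
  also have "\<dots> = 0" using k[OF b] by simp
  finally show "(\<Sum>a\<in>{1..5}. r a * M a b) = 0" .
qed

lemma sum4split: "(\<Sum>i\<le>(4::nat). f i) = f 0 + (\<Sum>i\<in>{1..4}. f i)"
proof -
  have "{..4::nat} = insert 0 {1..4}" by auto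
  thus ?thesis by simp
qed


theorem lemma4p6:
  fixes A :: quadR and p :: "nat \<Rightarrow> complex"
  assumes "alternating_quad A"
    and "on_X A p"
    and "zariski_tangent_dim A p \<ge> 2"
  shows "\<exists>g4 g5. unipotent_lower 4 g4 \<and> unipotent_lower 5 g5 \<and>
           ((\<exists>K\<in>{1..4}. normal_form_K (act g4 g5 A) K) \<or>
            (\<exists>I J K. 1 \<le> I \<and> I < J \<and> J \<le> 5 \<and> 1 \<le> K \<and> K \<le> 4 \<and>
                     normal_form_IJK (act g4 g5 A) I J K))"
proof -
  note altA = assms(1)
  have onX: "\<exists>k\<in>{1..4}. p k \<noteq> 0" "\<And>e. e \<in> {1..5} \<Longrightarrow> subpf (evalA0 A p) e = 0"
    using assms(2) unfolding on_X_def by blast+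
  define KS where "KS = {k\<in>{1..4::nat}. p k \<noteq> 0}"
  have KSne: "KS \<noteq> {}" using onX(1) unfolding KS_def by blast
  have KSfin: "finite KS" unfolding KS_def by simp
  define K where "K = Max KS"
  have KKS: "K \<in> KS" unfolding K_def using Max_in[OF KSfin KSne] .
  have K14: "K \<in> {1..4}" and pK: "p K \<noteq> 0" using KKS unfolding KS_def by auto
  have Kmax: "p l = 0" if "l \<in> {1..4}" "K < l" for l
  proof (rule ccontr)
    assume "p l \<noteq> 0"
    hence "l \<in> KS" using that unfolding KS_def by auto
    hence "l \<le> K" unfolding K_def using Max_ge[OF KSfin] by blast
    with that show False by simp
  qed
  define g4 where "g4 = (\<lambda>k l. if k = K then (if l \<le> K then p l / p K else 0) else (if k = l then 1 else (0::complex)))"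
  have g4u: "unipotent_lower 4 g4"
    unfolding unipotent_lower_def g4_def using pK by auto
  have g4K: "(\<Sum>l\<in>{1..4}. g4 K l * F l) = (\<Sum>l\<in>{1..4}. p l * F l) / p K" for F
  proof -
    have "(\<Sum>l\<in>{1..4}. g4 K l * F l) = (\<Sum>l\<in>{1..4}. (p l * F l) / p K)"
    proof (intro sum.cong refl)
      fix l assume l: "l \<in> {1..4::nat}"
      show "g4 K l * F l = p l * F l / p K"
      proof (cases "l \<le> K")
        case True thus ?thesis unfolding g4_def by simp
      next
        case False thus ?thesis using Kmax[OF l] unfolding g4_def by simp
      qed
    qed
    also have "\<dots> = (\<Sum>l\<in>{1..4}. p l * F l) / p K" by (simp add: sum_divide_distrib)
    finally show ?thesis .
  qed
  define A0 where "A0 = (\<lambda>l i j. fst (A l i j))"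
  define A1 where "A1 = (\<lambda>l i j. snd (A l i j))"
  have altA0: "altm (A0 l)" if "l \<in> {1..4}" for l unfolding A0_def using altm_fstA[OF altA that] by simp
  have altA1: "altm (A1 l)" if "l \<in> {1..4}" for l unfolding A1_def using altm_fstA[OF altA that] by simp
  define M0 where "M0 = evalA0 A p"
  have M0e: "M0 = (\<lambda>i j. \<Sum>l\<in>{1..4}. A0 l i j * p l)"
    unfolding M0_def evalA0_def red0_def A0_def ..
  have M0e': "(\<lambda>a b. \<Sum>l\<in>{1..4}. p l * A0 l a b) = M0"
    unfolding M0e by (simp add: mult.commute)
  have altM0: "altm M0" unfolding M0e by (rule altm_sum[OF altA0])
  have subM0: "subpf M0 e = 0" if "e \<in> {1..5}" for e unfolding M0_def using onX(2)[OF that] .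
  define Y where "Y = (\<lambda>i j. \<Sum>l\<in>{1..4}. A1 l i j * p l)"
  have Ye': "(\<lambda>a b. \<Sum>l\<in>{1..4}. p l * A1 l a b) = Y"
    unfolding Y_def by (simp add: mult.commute)
  have altY: "altm Y" unfolding Y_def by (rule altm_sum[OF altA1])
  have actF: "fst (act g4 g5 A k i j) = (\<Sum>l\<in>{1..4}. g4 k l * bil (A0 l) (g5 i) (g5 j))" for g5 k i j
    unfolding act_fst A0_def ..
  have actS: "snd (act g4 g5 A k i j) = (\<Sum>l\<in>{1..4}. g4 k l * bil (A1 l) (g5 i) (g5 j))" for g5 k i j
    unfolding act_snd A1_def ..
  have actK: "fst (act g4 g5 A K i j) = bil M0 (g5 i) (g5 j) / p K" for g5 i j
  proof -
    have "fst (act g4 g5 A K i j) = (\<Sum>l\<in>{1..4}. p l * bil (A0 l) (g5 i) (g5 j)) / p K"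
      unfolding actF by (rule g4K)
    also have "\<dots> = bil M0 (g5 i) (g5 j) / p K" by (simp only: bil_lin_mat M0e')
    finally show ?thesis .
  qed
  have actKs: "snd (act g4 g5 A K i j) = bil Y (g5 i) (g5 j) / p K" for g5 i j
  proof -
    have "snd (act g4 g5 A K i j) = (\<Sum>l\<in>{1..4}. p l * bil (A1 l) (g5 i) (g5 j)) / p K"
      unfolding actS by (rule g4K)
    also have "\<dots> = bil Y (g5 i) (g5 j) / p K" by (simp only: bil_lin_mat Ye')
    finally show ?thesis .
  qed
  show ?thesis
  proof (cases "\<forall>i\<in>{1..5}. \<forall>j\<in>{1..5}. M0 i j = 0")
    case True
    define g5 where "g5 = (\<lambda>i j::nat. if i = j then 1 else (0::complex))"
    have g5u: "unipotent_lower 5 g5" unfolding unipotent_lower_def g5_def by auto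
    have "normal_form_K (act g4 g5 A) K"
      unfolding normal_form_K_def
    proof (intro ballI)
      fix i j assume ij: "i \<in> {1..5::nat}" "j \<in> {1..5::nat}"
      have "g5 i = (\<lambda>a. if i = a then 1 else 0)" "g5 j = (\<lambda>b. if j = b then 1 else 0)"
        unfolding g5_def by auto
      hence "fst (act g4 g5 A K i j) = M0 i j / p K" unfolding actK using bil_delta[OF ij] by simp
      thus "fst (act g4 g5 A K i j) = 0" using True ij by simp
    qed
    thus ?thesis using g4u g5u K14 by blast
  next
    case False
    then obtain i0 j0 where ij0: "i0 \<in> {1..5}" "j0 \<in> {1..5}" "M0 i0 j0 \<noteq> 0" by blast
    have "i0 \<noteq> j0" using ij0 altm_diag[OF altM0] by auto
    then obtain a b where ab: "1 \<le> a" "a < b" "b \<le> 5" "M0 a b \<noteq> 0"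
    proof (cases "i0 < j0")
      case True thus ?thesis using that ij0 by auto
    next
      case False
      hence "j0 < i0" using \<open>i0 \<noteq> j0\<close> by simp
      moreover have "M0 j0 i0 \<noteq> 0" using altm_app[OF altM0 ij0(1) ij0(2)] ij0(3) by simp
      ultimately show ?thesis using that ij0 by auto
    qed
    define c1 where "c1 = cc a b 0"
    define c2 where "c2 = cc a b 1"
    define c3 where "c3 = cc a b 2"
    have ccf: "{1..5} = {a,b,c1,c2,c3}" "distinct [a,b,c1,c2,c3]"
      using cc_facts[OF ab(1-3)] unfolding c1_def c2_def c3_def by blast+
    have inS: "a \<in> {1..5}" "b \<in> {1..5}" "c1 \<in> {1..5}" "c2 \<in> {1..5}" "c3 \<in> {1..5}"
      using ccf(1) by blast+
    have pfM: "pf4 M0 a b c1 c2 = 0 \<and> pf4 M0 a b c1 c3 = 0 \<and> pf4 M0 a b c2 c3 = 0"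
      using pf_cases[OF altm_cond[OF altM0] subM0 ab(1-3)] unfolding c1_def c2_def c3_def .
    have Pfact: "pf4 M0 a b c d = 0" if "c \<in> {c1,c2,c3}" "d \<in> {c1,c2,c3}" for c d
      using P3[OF altM0 inS(3) inS(4) inS(5) _ _ _ that] pfM by blast
    interpret G: gset a b c1 c2 c3 M0
      using ccf(1) ccf(2) altM0 ab(4) Pfact by (rule gset.intro)
    define k1 where "k1 = kv M0 a b c1"
    define k2 where "k2 = kv M0 a b c2"
    define k3 where "k3 = kv M0 a b c3"
    define T where "T = tangent_cone A p"
    define C where "C = (\<lambda>u w i. if i = 0 then bil Y u w else bil (A0 i) u w)"
    have Tprop: "(\<Sum>i\<le>4. C (kv M0 a b c) (kv M0 a b d) i * v i) = 0"
      if v: "v \<in> T" and cd: "(c = c1 \<and> d = c2) \<or> (c = c1 \<and> d = c3) \<or> (c = c2 \<and> d = c3)" for v c d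
    proof -
      define Nv where "Nv = (\<lambda>i j. (\<Sum>l\<in>{1..4}. A0 l i j * v l) + v 0 * Y i j)"
      define E where "E = evalA_dual A (v 0) p v"
      have vc: "\<forall>i\<in>{1..5}. coeff (subpf E i) 0 = 0 \<and> coeff (subpf E i) 1 = 0"
        using v unfolding T_def tangent_cone_def E_def by blast
      have E0: "(\<lambda>i j. coeff (E i j) 0) = M0" by (simp add: E_def coeffE0 M0_def)
      have E1: "(\<lambda>i j. coeff (E i j) 1) = Nv" unfolding E_def coeffE1 Nv_def A0_def A1_def Y_def ..
      have cz: "coeff (subpf E e) 1 = 0" if "e \<in> {1..5}" for e using vc that by blast
      note sc = subpf_coeff[of E, unfolded E0 E1]
      have z1: "pf4B M0 Nv 2 3 4 5 = 0" using cz[of 1] sc(1) by simp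
      have z2: "pf4B M0 Nv 1 3 4 5 = 0" using cz[of 2] sc(2) by simp
      have z3: "pf4B M0 Nv 1 2 4 5 = 0" using cz[of 3] sc(3) by simp
      have z4: "pf4B M0 Nv 1 2 3 5 = 0" using cz[of 4] sc(4) by simp
      have z5: "pf4B M0 Nv 1 2 3 4 = 0" using cz[of 5] sc(5) by simp
      have altNv: "altm Nv" unfolding Nv_def by (rule altm_lin[OF altm_sum[OF altA0] altY])
      have pfB: "pf4B M0 Nv a b c1 c2 = 0 \<and> pf4B M0 Nv a b c1 c3 = 0 \<and> pf4B M0 Nv a b c2 c3 = 0"
        using pfB_cases[OF altm_cond[OF altM0] altm_cond[OF altNv] z1 z2 z3 z4 z5 ab(1-3)]
        unfolding c1_def c2_def c3_def .
      have cC: "c \<in> {c1,c2,c3}" "d \<in> {c1,c2,c3}" using cd by auto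
      have cdne: "c \<noteq> d" using cd ccf(2) by auto
      have pz: "pf4B M0 Nv a b c d = 0" using cd pfB by auto
      have "M0 a b * bil Nv (kv M0 a b c) (kv M0 a b d) = 0"
        using G.kv_bil[OF cC(1) cC(2) cdne altNv] pz by simp
      hence bz: "bil Nv (kv M0 a b c) (kv M0 a b d) = 0" using ab(4) by simp
      have bl: "bil Nv u w = (\<Sum>l\<in>{1..4}. v l * bil (A0 l) u w) + v 0 * bil Y u w" for u w
        unfolding Nv_def by (rule bil_lin2)
      define uu where "uu = kv M0 a b c"
      define ww where "ww = kv M0 a b d"
      have s1: "(\<Sum>i\<le>4. C uu ww i * v i) = C uu ww 0 * v 0 + (\<Sum>i\<in>{1..4}. C uu ww i * v i)"
        by (rule sum4split)
      have s2: "(\<Sum>i\<in>{1..4}. C uu ww i * v i) = (\<Sum>l\<in>{1..4}. v l * bil (A0 l) uu ww)"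
        unfolding C_def by (intro sum.cong refl) (simp add: mult.commute)
      have s3: "C uu ww 0 = bil Y uu ww" unfolding C_def by simp
      have "(\<Sum>i\<le>4. C uu ww i * v i) = bil Nv uu ww"
        unfolding s1 s2 s3 bl by (simp add: mult.commute add.commute)
      thus ?thesis using bz unfolding uu_def ww_def by simp
    qed
    have dimT: "cs.dim T \<ge> 3" using assms(3) unfolding zariski_tangent_dim_def T_def by simp
    have suppT: "v i = 0" if "v \<in> T" "i > 4" for v i using that unfolding T_def tangent_cone_def by blast
    obtain l1 l2 l3 where L: "l1 \<noteq> 0 \<or> l2 \<noteq> 0 \<or> l3 \<noteq> 0"
        "\<forall>i\<le>4. l1 * C k1 k2 i + l2 * C k1 k3 i + l3 * C k2 k3 i = 0"
    proof -
      have H1: "(\<Sum>i\<le>4. C k1 k2 i * v i) = 0" if "v \<in> T" for v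
        using Tprop[OF that, of c1 c2] unfolding k1_def k2_def by simp
      have H2: "(\<Sum>i\<le>4. C k1 k3 i * v i) = 0" if "v \<in> T" for v
        using Tprop[OF that, of c1 c3] unfolding k1_def k3_def by simp
      have H3: "(\<Sum>i\<le>4. C k2 k3 i * v i) = 0" if "v \<in> T" for v
        using Tprop[OF that, of c2 c3] unfolding k2_def k3_def by simp
      have "\<exists>l1 l2 l3. (l1 \<noteq> 0 \<or> l2 \<noteq> 0 \<or> l3 \<noteq> 0) \<and> (\<forall>i\<le>4. l1 * C k1 k2 i + l2 * C k1 k3 i + l3 * C k2 k3 i = 0)"
      proof (rule dim_lemma[of T "C k1 k2" "C k1 k3" "C k2 k3"])
        show "3 \<le> cs.dim T" by (rule dimT)
        show "\<And>v i. v \<in> T \<Longrightarrow> 4 < i \<Longrightarrow> v i = 0" by (rule suppT)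
        show "\<And>v. v \<in> T \<Longrightarrow> (\<Sum>i\<le>4. C k1 k2 i * v i) = 0" by (rule H1)
        show "\<And>v. v \<in> T \<Longrightarrow> (\<Sum>i\<le>4. C k1 k3 i * v i) = 0" by (rule H2)
        show "\<And>v. v \<in> T \<Longrightarrow> (\<Sum>i\<le>4. C k2 k3 i * v i) = 0" by (rule H3)
      qed
      thus ?thesis using that by blast
    qed
    define \<beta> where "\<beta> X = l1 * bil X k1 k2 + l2 * bil X k1 k3 + l3 * bil X k2 k3" for X
    have \<beta>A0: "\<beta> (A0 l) = 0" if "l \<in> {1..4}" for l
      using L(2) that unfolding \<beta>_def C_def by auto
    have \<beta>Y: "\<beta> Y = 0" using L(2) unfolding \<beta>_def C_def by auto
    obtain u1 u2 u3 w1 w2 w3 where U: "u1*w2 - u2*w1 = l1" "u1*w3 - u3*w1 = l2" "u2*w3 - u3*w2 = l3"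
      using dec3 by blast
    define r' where "r' = (\<lambda>i. u1*k1 i + u2*k2 i + u3*k3 i)"
    define s' where "s' = (\<lambda>i. w1*k1 i + w2*k2 i + w3*k3 i)"
    have brs: "bil X r' s' = \<beta> X" if "altm X" for X
      unfolding r'_def s'_def bil_comb3_alt[OF that] U \<beta>_def ..
    have kvals: "k1 c1 = 1" "k1 c2 = 0" "k1 c3 = 0" "k2 c1 = 0" "k2 c2 = 1" "k2 c3 = 0"
        "k3 c1 = 0" "k3 c2 = 0" "k3 c3 = 1"
      using ccf(2) unfolding k1_def k2_def k3_def kv_def by auto
    have rv: "r' c1 = u1" "r' c2 = u2" "r' c3 = u3" "s' c1 = w1" "s' c2 = w2" "s' c3 = w3"
      unfolding r'_def s'_def kvals by simp_all
    have minor: "\<exists>i\<in>{1..5}. \<exists>j\<in>{1..5}. r' i * s' j - r' j * s' i \<noteq> 0"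
    proof -
      have "r' c1 * s' c2 - r' c2 * s' c1 \<noteq> 0 \<or> r' c1 * s' c3 - r' c3 * s' c1 \<noteq> 0 \<or> r' c2 * s' c3 - r' c3 * s' c2 \<noteq> 0"
        unfolding rv U using L(1) .
      thus ?thesis using inS by blast
    qed
    obtain x1 x2 y1 y2 I J where E: "1 \<le> I" "I < J" "J \<le> (5::nat)"
       "x1 * r' I + x2 * s' I = 1" "y1 * r' J + y2 * s' J = 1"
       "\<forall>j\<in>{1..5}. I < j \<longrightarrow> x1 * r' j + x2 * s' j = 0" "\<forall>j\<in>{1..5}. J < j \<longrightarrow> y1 * r' j + y2 * s' j = 0"
      using ech[OF minor] by blast
    define r2 where "r2 = (\<lambda>i. x1 * r' i + x2 * s' i)"
    define s2 where "s2 = (\<lambda>i. y1 * r' i + y2 * s' i)"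
    have b2: "bil X r2 s2 = (x1*y2 - x2*y1) * \<beta> X" if "altm X" for X
      unfolding r2_def s2_def bil_comb_alt[OF that] brs[OF that] ..
    have kk: "(\<Sum>j\<in>{1..5}. M0 d j * k1 j) = 0" "(\<Sum>j\<in>{1..5}. M0 d j * k2 j) = 0" "(\<Sum>j\<in>{1..5}. M0 d j * k3 j) = 0"
      if "d \<in> {1..5}" for d
      unfolding k1_def k2_def k3_def using G.kv_ker[OF _ that] by auto
    have r2e: "r2 = (\<lambda>i. (x1*u1 + x2*w1) * k1 i + (x1*u2 + x2*w2) * k2 i + (x1*u3 + x2*w3) * k3 i)"
      unfolding r2_def r'_def s'_def by (simp add: algebra_simps)
    have s2e: "s2 = (\<lambda>i. (y1*u1 + y2*w1) * k1 i + (y1*u2 + y2*w2) * k2 i + (y1*u3 + y2*w3) * k3 i)"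
      unfolding s2_def r'_def s'_def by (simp add: algebra_simps)
    have kerr2: "(\<Sum>j\<in>{1..5}. M0 d j * r2 j) = 0" if "d \<in> {1..5}" for d
      unfolding r2e by (rule kerc[of M0 d k1 k2 k3, OF kk[OF that]])
    have kers2: "(\<Sum>j\<in>{1..5}. M0 d j * s2 j) = 0" if "d \<in> {1..5}" for d
      unfolding s2e by (rule kerc[of M0 d k1 k2 k3, OF kk[OF that]])
    define g5 where "g5 = (\<lambda>i j. if i = I then r2 j else if i = J then s2 j else if i = j then 1 else (0::complex))"
    have IJ: "I \<noteq> J" using E(2) by simp
    have g5I: "g5 I = r2" "g5 J = s2" unfolding g5_def using IJ by auto
    have g5u: "unipotent_lower 5 g5"
      unfolding unipotent_lower_def
    proof (intro conjI ballI impI)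
      fix i assume "i \<in> {1..5::nat}"
      show "g5 i i = 1" using E(4) E(5) IJ unfolding g5_def r2_def s2_def by auto
    next
      fix i j assume ij: "i \<in> {1..5::nat}" "j \<in> {1..5::nat}" "i < j"
      show "g5 i j = 0" using E(6) E(7) ij IJ unfolding g5_def r2_def s2_def by auto
    qed
    have nf: "normal_form_IJK (act g4 g5 A) I J K"
      unfolding normal_form_IJK_def
    proof (intro conjI ballI)
      fix k assume k: "k \<in> {1..4::nat}"
      have "fst (act g4 g5 A k I J) = (\<Sum>l\<in>{1..4}. g4 k l * bil (A0 l) r2 s2)"
        unfolding actF g5I ..
      also have "\<dots> = 0"
        by (intro sum.neutral ballI) (simp add: b2[OF altA0] \<beta>A0)
      finally show "fst (act g4 g5 A k I J) = 0" .
    next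
      fix j assume j: "j \<in> {1..5::nat}"
      have "bil M0 r2 (g5 j) = 0" by (rule bil_kerL[OF kerL[OF altM0 kerr2]])
      thus "fst (act g4 g5 A K I j) = 0" unfolding actK g5I by simp
    next
      fix i assume i: "i \<in> {1..5::nat}"
      have "bil M0 (g5 i) s2 = 0" by (rule bil_kerR) (use kers2 in blast)
      thus "fst (act g4 g5 A K i J) = 0" unfolding actK g5I by simp
    next
      have f: "fst (act g4 g5 A K I J) = 0"
        unfolding actK g5I using bil_kerL[OF kerL[OF altM0 kerr2]] by simp
      have "snd (act g4 g5 A K I J) = 0"
        unfolding actKs g5I b2[OF altY] \<beta>Y by simp
      with f show "act g4 g5 A K I J = (0, 0)" by (simp add: prod_eq_iff)
    qed
    have K14': "1 \<le> K" "K \<le> 4" using K14 by auto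
    have "\<exists>I J K. 1 \<le> I \<and> I < J \<and> J \<le> 5 \<and> 1 \<le> K \<and> K \<le> 4 \<and> normal_form_IJK (act g4 g5 A) I J K"
      using nf E(1-3) K14' by blast
    thus ?thesis using g4u g5u by blast

  qed
qed

end
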